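(* Let $U$ be a reasonably elastic utility function with conjugate $V$, let $\Lambda'\subseteq\Lambda_M$ be $V$-relatively compact, and let $\tau$ be an appropriate topology. Let $Y$ be a random variable bounded from below by a strictly positive constant such that $\sup_{\lambda\in\Lambda'}\mathbb{E}[Z^\lambda_TY]<\infty$. Then the mapping $(y,\lambda)\mapsto V(yZ^\lambda_TY)$ is continuous from $(0,\infty)\times\Lambda'$ (with the product of the Euclidean topology and $\tau$) into $\mathbb{L}^1(\mathbb{P})$. In particular, $(y,\lambda)\mapsto\mathbb{E}[V(yZ^\lambda_TY)]$ is continuous.
   Context: Let $(\Omega,\mathcal{F},\mathbb{P})$ be a complete probability space with a filtration $(\mathcal{F}_t)_{t\in[0,T]}$ satisfying the usual conditions, $T>0$ fixed. Let $M$ be a continuous local martingale with quadratic variation $\langle M\rangle$. $\Lambda$ is the set of predictable processes $\lambda$ with $\int_0^T\lambda_u^2\,d\langle M\rangle_u<\infty$ a.s. For $\lambda\in\Lambda$ let $S^\lambda_t=1+M_t+\int_0^t\lambda_u\,d\langle M\rangle_u$ and $Z^\lambda_t=\exp\big(-\int_0^t\lambda_u\,dM_u-\tfrac12\int_0^t\lambda_u^2\,d\langle M\rangle_u\big)$. $\Lambda_M$ is the set of $\lambda\in\Lambda$ for which $S^\lambda$ satisfies No Free Lunch with Vanishing Risk. A reasonably elastic utility function is a strictly concave, strictly increasing $C^1$ function $U:(0,\infty)\to\mathbb{R}$ with $\lim_{x\to0}U'(x)=\infty$, $\lim_{x\to\infty}U'(x)=0$, and $AE[U]<1$, where $AE[U]=\limsup_{x\to\infty}xU'(x)/U(x)$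 if $\lim_{x\to\infty}U(x)=+\infty$ and $AE[U]=0$ otherwise; $V(y)=\sup_{x>0}(U(x)-xy)$. A metrizable topology $\tau$ on $\Lambda$ is appropriate if $\lambda\mapsto Z^\lambda_T$ is continuous from $(\Lambda,\tau)$ into random variables with convergence in probability. A subset $\Lambda'\subseteq\Lambda$ is $V$-relatively compact if $\{V(Z^\lambda_T):\lambda\in\Lambda'\}$ is uniformly integrable. *)

theory Defs
  imports "HOL-Probability.Probability"
begin

definition strictly_concave_on :: "real set \<Rightarrow> (real \<Rightarrow> real) \<Rightarrow> bool" where
  "strictly_concave_on S f \<longleftrightarrow>
     (\<forall>x\<in>S. \<forall>y\<in>S. \<forall>t::real. x \<noteq> y \<and> 0 < t \<and> t < 1 \<longrightarrow>
        f (t * x + (1 - t) * y) > t * f x + (1 - t) * f y)"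

definition asymptotic_elasticity :: "(real \<Rightarrow> real) \<Rightarrow> ereal" where
  "asymptotic_elasticity U =
     (if filterlim U at_top at_top
      then Limsup at_top (\<lambda>x. ereal (x * deriv U x / U x))
      else 0)"

definition reasonably_elastic :: "(real \<Rightarrow> real) \<Rightarrow> bool" where
  "reasonably_elastic U \<longleftrightarrow>
     strictly_concave_on {0<..} U \<and>
     strict_mono_on {0<..} U \<and>
     (\<forall>x>0. U differentiable (at x)) \<and>
     continuous_on {0<..} (deriv U) \<and>
     filterlim (deriv U) at_top (at_right 0) \<and>
     ((deriv U) \<longlongrightarrow> 0) at_top \<and>
     asymptotic_elasticity U < 1"

definition conjugate :: "(real \<Rightarrow> real) \<Rightarrow> real \<Rightarrow> real" where
  "conjugate U y = (SUP x\<in>{0<..}. U x - x * y)"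

definition unif_integrable :: "'a measure \<Rightarrow> ('a \<Rightarrow> real) set \<Rightarrow> bool" where
  "unif_integrable M F \<longleftrightarrow>
     (\<forall>f\<in>F. f \<in> borel_measurable M) \<and>
     ((\<lambda>K::real. SUP f\<in>F. \<integral>\<^sup>+ x. ennreal (\<bar>f x\<bar> * indicator {x. \<bar>f x\<bar> > K} x) \<partial>M)
        \<longlongrightarrow> 0) at_top"

text \<open>A metrizable topology tau on Lambda (= topspace tau) is appropriate for the family
  Z (lambda \<mapsto> Z^lambda_T) if lambda \<mapsto> Z lambda is continuous into random variables
  with the topology of convergence in probability.\<close>
definition appropriate_topology ::
  "'a measure \<Rightarrow> 'l topology \<Rightarrow> ('l \<Rightarrow> 'a \<Rightarrow> real) \<Rightarrow> bool" where
  "appropriate_topology M \<tau> Z \<longleftrightarrow>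
     metrizable_space \<tau> \<and>
     (\<forall>l0\<in>topspace \<tau>. \<forall>e>0. \<exists>N. openin \<tau> N \<and> l0 \<in> N \<and>
        (\<forall>l\<in>N. measure M {\<omega>\<in>space M. \<bar>Z l \<omega> - Z l0 \<omega>\<bar> > e} < e))"

end

theory Submission
  imports Defs
begin


locale util =
  fixes U :: "real \<Rightarrow> real"
  assumes re: "reasonably_elastic U"
begin

abbreviation V where "V \<equiv> conjugate U"

lemma mono_U: "0 < x \<Longrightarrow> x \<le> x' \<Longrightarrow> U x \<le> U x'"
  using re unfolding reasonably_elastic_def strict_mono_on_def
  by (metis greaterThan_iff less_eq_real_def order_less_le_trans)

lemma derivU: "0 < x \<Longrightarrow> DERIV U x :> deriv U x"
  using re unfolding reasonably_elastic_def
  by (simp add: DERIV_deriv_iff_real_differentiable)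

lemma bdd: assumes "y > 0" shows "bdd_above ((\<lambda>x. U x - x*y) ` {0<..})"
proof -
  have "((deriv U) \<longlongrightarrow> 0) at_top" using re unfolding reasonably_elastic_def by simp
  then have "eventually (\<lambda>x. deriv U x < y) at_top"
    using assms by (rule order_tendstoD(2))
  then obtain x1 where x1: "\<And>x. x \<ge> x1 \<Longrightarrow> deriv U x < y"
    by (auto simp: eventually_at_top_linorder)
  define x2 where "x2 = max x1 1"
  have x2: "x2 > 0" "\<And>x. x \<ge> x2 \<Longrightarrow> deriv U x < y" using x1 by (auto simp: x2_def)
  have "U x - x*y \<le> U x2" if "x > 0" for x
  proof (cases "x \<le> x2")
    case True
    have "x*y > 0" using that assms by simp
    then show ?thesis using mono_U[OF that True] by linarith
  next
    case False
    then obtain z where z: "x2 < z" "z < x" "U x - U x2 = (x - x2) * deriv U z"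
      using MVT2[of x2 x U "deriv U"] derivU x2 by force
    have "(x - x2) * deriv U z \<le> (x - x2) * y" using x2(2)[of z] z False
      by (intro mult_left_mono) auto
    moreover have "(x - x2)*y = x*y - x2*y" by (simp add: algebra_simps)
    moreover have "x2*y > 0" using x2 assms by simp
    ultimately show ?thesis using z by linarith
  qed
  then show ?thesis by (auto simp: bdd_above_def)
qed

lemma le_V: "0 < y \<Longrightarrow> 0 < x \<Longrightarrow> U x - x*y \<le> V y"
  unfolding conjugate_def by (rule cSUP_upper[OF _ bdd]) auto

lemma V_le: "0 < y \<Longrightarrow> (\<And>x. 0 < x \<Longrightarrow> U x - x*y \<le> B) \<Longrightarrow> V y \<le> B"
  unfolding conjugate_def by (rule cSUP_least) auto

lemma V_antimono: assumes "0 < y1" "y1 \<le> y2" shows "V y2 \<le> V y1"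
proof (rule V_le)
  show "0 < y2" using assms by simp
  fix x :: real assume x: "0 < x"
  have "x*y1 \<le> x*y2" using x assms by (intro mult_left_mono) auto
  with le_V[OF assms(1) x] show "U x - x*y2 \<le> V y1" by linarith
qed

lemma V_convex: "convex_on {0<..} V"
proof (rule convex_onI)
  fix t x y :: real assume t: "0 < t" "t < 1" and xy: "x \<in> {0<..}" "y \<in> {0<..}"
  show "V ((1 - t) *\<^sub>R x + t *\<^sub>R y) \<le> (1 - t) * V x + t * V y"
  proof (rule V_le)
    show "0 < (1 - t) *\<^sub>R x + t *\<^sub>R y" using t xy by (simp add: add_pos_pos)
    fix z :: real assume z: "0 < z"
    have "U z - z * ((1 - t) *\<^sub>R x + t *\<^sub>R y) = (1-t) * (U z - z*x) + t * (U z - z*y)"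
      by (simp add: algebra_simps)
    also have "\<dots> \<le> (1 - t) * V x + t * V y"
    proof (rule add_mono)
      show "(1-t)*(U z - z*x) \<le> (1-t) * V x"
        by (rule mult_left_mono) (use le_V[of x z] xy z t in auto)
      show "t*(U z - z*y) \<le> t * V y"
        by (rule mult_left_mono) (use le_V[of y z] xy z t in auto)
    qed
    finally show "U z - z * ((1 - t) *\<^sub>R x + t *\<^sub>R y) \<le> (1 - t) * V x + t * V y" .
  qed
qed (auto simp: convex_real_interval)

lemma V_cont: "continuous_on {0<..} V"
  by (rule convex_on_continuous[OF _ V_convex]) auto

lemma V_neg: assumes "y < 0" shows "V y = V (-1)"
proof -
  have unb: "\<not> bdd_above ((\<lambda>x. U x - x*y) ` {0<..})" if "y < 0" for y :: real
  proof
    assume "bdd_above ((\<lambda>x. U x - x*y) ` {0<..})"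
    then obtain B where B: "\<And>x. x > 0 \<Longrightarrow> U x - x*y \<le> B" by (auto simp: bdd_above_def)
    define x where "x = max 1 ((B - U 1 + 1) / (-y))"
    have x1: "x \<ge> 1" by (simp add: x_def)
    have xq: "x \<ge> (B - U 1 + 1) / (-y)" by (simp add: x_def)
    have "x * (-y) \<ge> ((B - U 1 + 1) / (-y)) * (-y)"
      using that by (intro mult_right_mono[OF xq]) auto
    also have "((B - U 1 + 1) / (-y)) * (-y) = B - U 1 + 1" using that by simp
    finally have "x * (-y) \<ge> B - U 1 + 1" .
    moreover have "U x \<ge> U 1" using mono_U x1 by auto
    moreover have "U x - x*y \<le> B" using B x1 by auto
    ultimately show False by (simp add: algebra_simps)
  qed
  have e: "(\<lambda>z. \<forall>w\<in>(\<lambda>x. U x - x*y) ` {0<..}. w \<le> z) = (\<lambda>z. False)" if "y < 0" for y :: real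
    using unb[OF that] unfolding bdd_above_def fun_eq_iff by blast
  show ?thesis
    by (simp only: conjugate_def Sup_real_def e[OF assms] e[of "-1"] neg_less_0_iff_less zero_less_one)
qed

lemma V_meas: "V \<in> borel_measurable borel"
proof -
  have "V = (\<lambda>y. if y \<in> {..0} then (if y \<in> {..<0} then V (-1) else V 0)
                 else (if y \<in> {0<..} then V y else 0))"
  proof
    fix y :: real
    show "V y = (if y \<in> {..0} then (if y \<in> {..<0} then V (-1) else V 0)
                 else (if y \<in> {0<..} then V y else 0))"
    proof (cases "y < 0")
      case True then show ?thesis using V_neg[OF True] by simp
    next
      case False then show ?thesis by (cases "y = 0") auto
    qed
  qed
  also have "\<dots> \<in> borel_measurable borel"
    apply (rule measurable_If_set)
      apply (rule measurable_If_set)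
        apply simp
       apply simp
      apply simp
     apply (rule borel_measurable_continuous_on_if)
    using V_cont by auto
  finally show ?thesis .
qed


lemma U_bdd: assumes "\<not> filterlim U at_top at_top" shows "\<exists>B. \<forall>x>0. U x \<le> B"
proof (rule ccontr)
  assume "\<not> (\<exists>B. \<forall>x>0. U x \<le> B)"
  then have nb: "\<And>B. \<exists>x>0. U x > B" by (meson not_le)
  have "filterlim U at_top at_top"
  unfolding filterlim_at_top
  proof
    fix Z :: real
    obtain x where x: "x > 0" "U x > Z" using nb by blast
    show "eventually (\<lambda>y. Z \<le> U y) at_top"
      unfolding eventually_at_top_linorder
      using x mono_U by (intro exI[of _ x]) (meson less_le_trans less_imp_le)
  qed
  with assms show False by simp
qed

lemma growth:
  assumes "filterlim U at_top at_top"
  shows "\<exists>g x0. 0 < g \<and> g < 1 \<and> 0 < x0 \<and> (\<forall>x\<ge>x0. U x > 0) \<and>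
           (\<forall>x x'. x0 \<le> x \<longrightarrow> x \<le> x' \<longrightarrow> U x' \<le> (x'/x) powr g * U x)"
proof -
  have "Limsup at_top (\<lambda>x. ereal (x * deriv U x / U x)) < 1"
    using re assms unfolding reasonably_elastic_def asymptotic_elasticity_def by simp
  then obtain r :: real where r: "Limsup at_top (\<lambda>x. ereal (x * deriv U x / U x)) < ereal r" "ereal r < 1"
    using ereal_dense2 by blast
  define g where "g = max r (1/2)"
  have g: "0 < g" "g < 1" using r(2) by (auto simp: g_def)
  have ev1: "eventually (\<lambda>x. x * deriv U x / U x < g) at_top"
    using Limsup_lessD[OF r(1)] by eventually_elim (auto simp: g_def)
  have ev2: "eventually (\<lambda>x. 1 \<le> U x) at_top"
    using assms by (simp add: filterlim_at_top)
  obtain x1 where x1: "\<And>x. x \<ge> x1 \<Longrightarrow> x * deriv U x / U x < g \<and> 1 \<le> U x"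
    using eventually_conj[OF ev1 ev2] by (auto simp: eventually_at_top_linorder)
  define x0 where "x0 = max x1 1"
  have x0p: "0 < x0" by (simp add: x0_def)
  have x0e: "\<And>x. x \<ge> x0 \<Longrightarrow> x * deriv U x / U x < g \<and> 1 \<le> U x"
    using x1 by (auto simp: x0_def)
  note x0 = x0p x0e
  have key: "U x' \<le> (x'/x) powr g * U x" if xx: "x0 \<le> x" "x \<le> x'" for x x'
  proof (cases "x = x'")
    case True then show ?thesis using x0 xx by simp
  next
    case False
    then have lt: "x < x'" using xx by simp
    have der: "DERIV (\<lambda>t. ln (U t) - g * ln t) t :> deriv U t / U t - g * (1 / t)"
      if "x \<le> t" "t \<le> x'" for t
    proof -
      have t: "t > 0" "U t > 0" using x0e[of t] x0p xx that by auto
      show ?thesis using t derivU[OF t(1)]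
        by (auto intro!: derivative_eq_intros simp: field_simps)
    qed
    obtain z where z: "x < z" "z < x'"
      "(ln (U x') - g * ln x') - (ln (U x) - g * ln x) = (x' - x) * (deriv U z / U z - g * (1 / z))"
      using MVT2[OF lt der] by blast
    have zpos: "z > 0" "U z > 0" using x0e[of z] x0p xx z by auto
    have "z * deriv U z / U z < g" using x0e[of z] xx z by auto
    then have "deriv U z / U z < g * (1/z)" using zpos by (simp add: field_simps)
    then have "(x' - x) * (deriv U z / U z - g * (1 / z)) \<le> 0" using lt
      by (intro mult_nonneg_nonpos) auto
    then have lnle: "ln (U x') \<le> ln (U x) + g * (ln x' - ln x)" using z(3) by (simp add: algebra_simps)
    have pos: "U x > 0" "U x' > 0" "x > 0" "x' > 0"
      using x0e[of x] x0e[of x'] x0p xx by auto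
    have "U x' = exp (ln (U x'))" using pos by simp
    also have "\<dots> \<le> exp (ln (U x) + g * (ln x' - ln x))" using lnle by simp
    also have "\<dots> = U x * exp (g * ln (x'/x))" using pos by (simp add: exp_add ln_div)
    also have "\<dots> = (x'/x) powr g * U x" using pos by (simp add: powr_def mult.commute)
    finally show ?thesis .
  qed
  have pos': "\<forall>x\<ge>x0. U x > 0" using x0e by (meson less_le_trans zero_less_one)
  show ?thesis using g x0p pos' key by blast
qed

lemma V_elastic:
  assumes mu: "\<mu> > 0"
  shows "\<exists>K1 K2. 0 \<le> K1 \<and> 0 \<le> K2 \<and> (\<forall>z>0. V (\<mu>*z) \<le> K1*\<bar>V z\<bar> + K2)"
proof (cases "\<mu> \<ge> 1")
  case True
  have "V (\<mu>*z) \<le> 1*\<bar>V z\<bar> + 0" if "z > 0" for z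
  proof -
    have "z \<le> \<mu>*z" using True that by simp
    then have "V (\<mu>*z) \<le> V z" by (rule V_antimono[OF that])
    then show ?thesis using abs_ge_self[of "V z"] by linarith
  qed
  then show ?thesis by (intro exI[of _ 1] exI[of _ 0]) auto
next
  case False
  show ?thesis
  proof (cases "filterlim U at_top at_top")
    case False
    then obtain B where B: "\<And>x. x > 0 \<Longrightarrow> U x \<le> B" using U_bdd by blast
    have "V (\<mu>*z) \<le> 0*\<bar>V z\<bar> + \<bar>B\<bar>" if "z > 0" for z
    proof -
      have "V (\<mu>*z) \<le> \<bar>B\<bar>"
      proof (rule V_le)
        show "0 < \<mu>*z" using mu that by simp
        fix x :: real assume "0 < x"
        then have "x * (\<mu>*z) > 0" using mu that by simp
        then show "U x - x*(\<mu>*z) \<le> \<bar>B\<bar>" using B[OF \<open>0 < x\<close>] by linarith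
      qed
      then show ?thesis by simp
    qed
    then show ?thesis by (intro exI[of _ 0] exI[of _ "\<bar>B\<bar>"]) auto
  next
    case True
    obtain g x0 where g: "0 < g" "g < 1" "0 < x0" "\<And>x. x \<ge> x0 \<Longrightarrow> U x > 0"
      "\<And>x x'. x0 \<le> x \<Longrightarrow> x \<le> x' \<Longrightarrow> U x' \<le> (x'/x) powr g * U x"
      using growth[OF True] by blast
    define lam where "lam = max 1 ((1/\<mu>) powr (1/(1-g)))"
    have lam1: "lam \<ge> 1" by (simp add: lam_def)
    have "((1/\<mu>) powr (1/(1-g))) powr (1-g) \<le> lam powr (1-g)"
      using g by (intro powr_mono2) (auto simp: lam_def)
    moreover have "((1/\<mu>) powr (1/(1-g))) powr (1-g) = 1/\<mu>"
      using g mu by (simp add: powr_powr)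
    ultimately have lp: "lam powr (1-g) \<ge> 1/\<mu>" by simp
    have "lam = lam powr g * lam powr (1-g)" using lam1 by (simp add: powr_add[symmetric])
    moreover have "lam powr g * (1/\<mu>) \<le> lam powr g * lam powr (1-g)"
      using lp by (intro mult_left_mono) auto
    ultimately have "lam powr g * (1/\<mu>) \<le> lam" by simp
    then have lg: "lam powr g \<le> \<mu> * lam" using mu by (simp add: field_simps)
    have "V (\<mu>*z) \<le> (\<mu>*lam)*\<bar>V z\<bar> + \<bar>U (lam*x0)\<bar>" if z: "z > 0" for z
    proof (rule V_le)
      show "0 < \<mu>*z" using mu z by simp
      fix x :: real assume x: "0 < x"
      have nn: "0 \<le> (\<mu>*lam)*\<bar>V z\<bar>" using mu lam1 by simp
      show "U x - x*(\<mu>*z) \<le> (\<mu>*lam)*\<bar>V z\<bar> + \<bar>U (lam*x0)\<bar>"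
      proof (cases "x \<le> lam*x0")
        case True
        have "x*(\<mu>*z) > 0" using x mu z by simp
        moreover have "U x \<le> U (lam*x0)" using mono_U[OF x True] .
        ultimately show ?thesis using nn by linarith
      next
        case False
        define x' where "x' = x / lam"
        have x'0: "x' \<ge> x0" using False lam1 by (simp add: x'_def field_simps)
        have x'x: "x' \<le> x" using lam1 x by (simp add: x'_def field_simps)
        have xe: "x = lam * x'" using lam1 by (simp add: x'_def)
        have Ux': "U x' > 0" using g(4)[OF x'0] .
        have "U x \<le> (x/x') powr g * U x'" using g(5)[OF x'0 x'x] .
        also have "x/x' = lam" using lam1 x by (simp add: x'_def)
        finally have "U x \<le> lam powr g * U x'" .
        also have "\<dots> \<le> (\<mu>*lam) * U x'" using lg Ux' by (intro mult_right_mono) auto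
        finally have "U x - x*(\<mu>*z) \<le> (\<mu>*lam) * (U x' - x'*z)"
          by (simp add: xe algebra_simps)
        also have "\<dots> \<le> (\<mu>*lam) * V z"
          using le_V[OF z, of x'] x'0 g(3) mu lam1 by (intro mult_left_mono) auto
        also have "\<dots> \<le> (\<mu>*lam)*\<bar>V z\<bar>" using mu lam1 by (intro mult_left_mono) auto
        finally show ?thesis by simp
      qed
    qed
    then show ?thesis using mu lam1 by (intro exI[of _ "\<mu>*lam"] exI[of _ "\<bar>U (lam*x0)\<bar>"]) auto
  qed
qed

end



lemma div_aux2: "(q::real) \<noteq> 0 \<Longrightarrow> x / (2*q) * q = x / 2" by (simp add: field_simps)
lemma div_aux4: "(q::real) \<noteq> 0 \<Longrightarrow> q * (x / (4*q)) = x / 4" by (simp add: field_simps)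
lemma div_aux4': "(q::real) \<noteq> 0 \<Longrightarrow> x / (4*q) * q = x / 4" by (simp add: field_simps)

lemma close_args:
  fixes y y0 z z0 Yv R d r \<rho> a b c :: real
  assumes R: "R \<ge> 1" and c: "c > 0" "c \<le> Yv" "Yv \<le> R" and z0: "z0 \<le> R" "1/z0 \<le> R" "z0 > 0"
    and zd: "\<bar>z - z0\<bar> \<le> d" "d \<le> 1/(2*R)" "d \<le> \<rho>/(4*(y0*R))"
    and y0: "y0 > 0" and ab: "a = y0/2" "b = 2*y0"
    and r: "\<bar>y - y0\<bar> < r" "r \<le> a" "r \<le> \<rho>/(2*((R+1)*R))" and \<rho>: "\<rho> > 0"
  shows "a*c/(2*R) \<le> y*z*Yv \<and> y*z*Yv \<le> b*(R+1)*R \<and> a*c/(2*R) \<le> y0*z0*Yv \<and> y0*z0*Yv \<le> b*(R+1)*R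
     \<and> \<bar>y*z*Yv - y0*z0*Yv\<bar> < \<rho>"
proof -
  have R0: "R > 0" using R by simp
  have z0l: "1/R \<le> z0" using z0 R0 by (simp add: field_simps)
  have h: "1/R - 1/(2*R) = 1/(2*R)" using R0 by (simp add: field_simps)
  have h2: "1/(2*R) \<le> 1" using R by (simp add: field_simps)
  have h3: "1/(2*R) \<le> 1/R" using R0 by (simp add: field_simps)
  have zz: "z0 - d \<le> z" "z \<le> z0 + d" using zd(1) unfolding abs_le_iff by linarith+
  have zl: "1/(2*R) \<le> z" using zz zd(2) z0l h by linarith
  have zu: "z \<le> R+1" using zz zd(2) z0 h2 by linarith
  have yy: "y0 - r < y" "y < y0 + r" using r(1) unfolding abs_less_iff by linarith+
  have ya: "a \<le> y" "y \<le> b" using yy r ab y0 by linarith+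
  have a0: "a > 0" using ab y0 by simp
  have Y0: "Yv > 0" using c by simp
  have z00: "0 < 1/(2*R)" using R0 by simp
  have zp: "z > 0" using zl z00 by linarith
  have yp: "y > 0" using ya a0 by linarith
  have zpos: "z0 > 0" using z0 by simp
  have z0h: "1/(2*R) \<le> z0" using h3 z0l by linarith
  have e1: "a*c/(2*R) = a*(1/(2*R))*c" by simp
  have w1: "a*(1/(2*R))*c \<le> y*z*Yv"
    using ya a0 zl c z00 zp yp by (intro mult_mono) (auto intro: mult_nonneg_nonneg)
  have w2: "y*z*Yv \<le> b*(R+1)*R"
    using ya a0 zl zu c z00 R0 zp yp by (intro mult_mono) (auto intro: mult_nonneg_nonneg)
  have w3: "a*(1/(2*R))*c \<le> y0*z0*Yv"
    using ab y0 z0h zpos c z00 a0 mult_pos_pos[OF a0 zpos] by (intro mult_mono) (auto intro: mult_nonneg_nonneg)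
  have w4: "y0*z0*Yv \<le> b*(R+1)*R"
    using ab y0 z0 c R0 by (intro mult_mono) (auto intro: mult_nonneg_nonneg)
  have "y*z*Yv - y0*z0*Yv = (y - y0)*(z*Yv) + y0*Yv*(z - z0)" by (simp add: algebra_simps)
  then have "\<bar>y*z*Yv - y0*z0*Yv\<bar> \<le> \<bar>(y - y0)*(z*Yv)\<bar> + \<bar>y0*Yv*(z - z0)\<bar>"
    by (metis abs_triangle_ineq)
  also have "\<dots> = \<bar>y - y0\<bar>*(z*Yv) + y0*Yv*\<bar>z - z0\<bar>"
    using y0 Y0 zp by (simp add: abs_mult)
  finally have "\<bar>y*z*Yv - y0*z0*Yv\<bar> \<le> \<bar>y - y0\<bar>*(z*Yv) + y0*Yv*\<bar>z - z0\<bar>" .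
  moreover have "\<bar>y - y0\<bar>*(z*Yv) \<le> \<bar>y - y0\<bar>*((R+1)*R)"
    using zu c zl z00 by (intro mult_left_mono mult_mono) auto
  moreover have "\<bar>y - y0\<bar>*((R+1)*R) < \<rho>/2"
  proof -
    have "\<bar>y - y0\<bar>*((R+1)*R) < r*((R+1)*R)" using r R0 by (intro mult_strict_right_mono) auto
    also have "r*((R+1)*R) \<le> \<rho>/(2*((R+1)*R)) * ((R+1)*R)" using r R0 by (intro mult_right_mono) auto
    also have "\<dots> = \<rho>/2" using R0 by (intro div_aux2) simp
    finally show ?thesis .
  qed
  moreover have "y0*Yv*\<bar>z - z0\<bar> \<le> y0*R*d"
    using y0 c zd by (intro mult_mono) auto
  moreover have "y0*R*d \<le> (y0*R)*(\<rho>/(4*(y0*R)))" using zd y0 R0 by (intro mult_left_mono) auto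
  moreover have "(y0*R)*(\<rho>/(4*(y0*R))) = \<rho>/4" using y0 R0 by (intro div_aux4) simp
  ultimately have "\<bar>y*z*Yv - y0*z0*Yv\<bar> < \<rho>" using \<rho> by linarith
  then show ?thesis using e1 w1 w2 w3 w4 by simp
qed


locale setting = util U for U :: "real \<Rightarrow> real" +
  fixes M :: "'a measure" and \<tau> :: "'l topology" and Z :: "'l \<Rightarrow> 'a \<Rightarrow> real"
    and \<Lambda>' :: "'l set" and Y :: "'a \<Rightarrow> real" and c S :: real
  assumes P: "prob_space M"
  and Zm: "\<And>l. l \<in> topspace \<tau> \<Longrightarrow> Z l \<in> borel_measurable M"
  and Zp: "\<And>l \<omega>. l \<in> topspace \<tau> \<Longrightarrow> \<omega> \<in> space M \<Longrightarrow> Z l \<omega> > 0"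
  and sub: "\<Lambda>' \<subseteq> topspace \<tau>"
  and Vrc: "unif_integrable M ((\<lambda>l \<omega>. conjugate U (Z l \<omega>)) ` \<Lambda>')"
  and tau: "appropriate_topology M \<tau> Z"
  and Ym: "Y \<in> borel_measurable M"
  and cpos: "c > 0" and Yc: "AE \<omega> in M. Y \<omega> \<ge> c"
  and S0: "S \<ge> 0" and SZ: "\<And>l. l\<in>\<Lambda>' \<Longrightarrow> (\<integral>\<^sup>+\<omega>. ennreal (Z l \<omega> * Y \<omega>) \<partial>M) \<le> ennreal S"
begin

sublocale prob_space M by (rule P)

lemma Vm[measurable]: "f \<in> borel_measurable M \<Longrightarrow> (\<lambda>x. V (f x)) \<in> borel_measurable M"
  using measurable_compose[OF _ V_meas] by blast

lemma UI_tail: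
  assumes "t > 0"
  shows "\<exists>K\<ge>0. \<forall>l\<in>\<Lambda>'. (\<integral>\<^sup>+\<omega>. ennreal (\<bar>V (Z l \<omega>)\<bar> * indicator {\<omega>. \<bar>V (Z l \<omega>)\<bar> > K} \<omega>) \<partial>M) \<le> ennreal t"
proof -
  let ?h = "\<lambda>K f. \<integral>\<^sup>+ x. ennreal (\<bar>f x\<bar> * indicator {x. \<bar>f x\<bar> > K} x) \<partial>M"
  have "((\<lambda>K::real. SUP f\<in>((\<lambda>l \<omega>. V (Z l \<omega>)) ` \<Lambda>'). ?h K f) \<longlongrightarrow> 0) at_top"
    using Vrc unfolding unif_integrable_def by blast
  then have "eventually (\<lambda>K. (SUP f\<in>((\<lambda>l \<omega>. V (Z l \<omega>)) ` \<Lambda>'). ?h K f) < ennreal t) at_top"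
    using assms by (intro order_tendstoD(2)) auto
  then obtain K0 where K0: "\<And>K. K \<ge> K0 \<Longrightarrow> (SUP f\<in>((\<lambda>l \<omega>. V (Z l \<omega>)) ` \<Lambda>'). ?h K f) < ennreal t"
    by (auto simp: eventually_at_top_linorder)
  define K where "K = max K0 0"
  have "?h K (\<lambda>\<omega>. V (Z l \<omega>)) \<le> ennreal t" if "l \<in> \<Lambda>'" for l
  proof -
    have "?h K (\<lambda>\<omega>. V (Z l \<omega>)) \<le> (SUP f\<in>((\<lambda>l \<omega>. V (Z l \<omega>)) ` \<Lambda>'). ?h K f)"
      using that by (intro SUP_upper) auto
    also have "\<dots> < ennreal t" using K0[of K] by (simp add: K_def)
    finally show ?thesis by simp
  qed
  then show ?thesis by (intro exI[of _ K]) (auto simp: K_def)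
qed

lemma tail_bound:
  assumes [measurable]: "f \<in> borel_measurable M" and A[measurable]: "A \<in> sets M" and K: "K \<ge> 0"
  shows "(\<integral>\<^sup>+\<omega>. ennreal (\<bar>f \<omega>\<bar> * indicator A \<omega>) \<partial>M)
     \<le> (\<integral>\<^sup>+\<omega>. ennreal (\<bar>f \<omega>\<bar> * indicator {\<omega>. \<bar>f \<omega>\<bar> > K} \<omega>) \<partial>M) + ennreal K * emeasure M A"
proof -
  have "(\<integral>\<^sup>+\<omega>. ennreal (\<bar>f \<omega>\<bar> * indicator A \<omega>) \<partial>M)
     \<le> (\<integral>\<^sup>+\<omega>. ennreal (\<bar>f \<omega>\<bar> * indicator {\<omega>. \<bar>f \<omega>\<bar> > K} \<omega>) + ennreal K * indicator A \<omega> \<partial>M)"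
  proof (rule nn_integral_mono)
    fix \<omega>
    show "ennreal (\<bar>f \<omega>\<bar> * indicator A \<omega>)
        \<le> ennreal (\<bar>f \<omega>\<bar> * indicator {\<omega>. \<bar>f \<omega>\<bar> > K} \<omega>) + ennreal K * indicator A \<omega>"
    proof (cases "\<omega> \<in> A")
      case True
      show ?thesis
      proof (cases "\<bar>f \<omega>\<bar> > K")
        case True then show ?thesis using \<open>\<omega> \<in> A\<close> by simp
      next
        case False then show ?thesis using \<open>\<omega> \<in> A\<close> by (simp add: ennreal_leI)
      qed
    qed simp
  qed
  also have "\<dots> = (\<integral>\<^sup>+\<omega>. ennreal (\<bar>f \<omega>\<bar> * indicator {\<omega>. \<bar>f \<omega>\<bar> > K} \<omega>) \<partial>M) + ennreal K * emeasure M A"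
    by (subst nn_integral_add) (auto simp: nn_integral_cmult_indicator)
  finally show ?thesis .
qed

lemma Zm'[measurable]: "l \<in> \<Lambda>' \<Longrightarrow> Z l \<in> borel_measurable M"
  using Zm sub by blast

lemma X_bound_pt:
  assumes a: "a > 0" "a \<le> y" "y \<le> b" and e: "\<epsilon> > 0"
    and K: "\<And>z. z > 0 \<Longrightarrow> V (a*c*z) \<le> K1*\<bar>V z\<bar> + K2" "0 \<le> K1" "0 \<le> K2"
    and l: "l \<in> \<Lambda>'" and w: "\<omega> \<in> space M" "Y \<omega> \<ge> c"
  shows "\<bar>V (y * Z l \<omega> * Y \<omega>)\<bar> \<le> K1*\<bar>V (Z l \<omega>)\<bar> + (K2 + \<bar>U \<epsilon>\<bar>) + \<epsilon>*b*(Z l \<omega> * Y \<omega>)"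
proof -
  have z: "Z l \<omega> > 0" using Zp sub l w by blast
  have Y0: "Y \<omega> > 0" using w cpos by linarith
  have w0: "y * Z l \<omega> * Y \<omega> > 0" using a z Y0 by simp
  have "a * c * Z l \<omega> \<le> y * Z l \<omega> * Y \<omega>"
  proof -
    have "a * c \<le> y * Y \<omega>" using a w cpos by (intro mult_mono) auto
    then show ?thesis using z by (simp add: mult.commute mult.left_commute mult_right_mono)
  qed
  then have up: "V (y * Z l \<omega> * Y \<omega>) \<le> K1*\<bar>V (Z l \<omega>)\<bar> + K2"
    using V_antimono[of "a*c*Z l \<omega>"] a cpos z K(1)[OF z] by (meson mult_pos_pos order_trans)
  have "y * Z l \<omega> * Y \<omega> \<le> b * (Z l \<omega> * Y \<omega>)" using a z Y0 by (simp add: mult.assoc mult_right_mono)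
  then have "\<epsilon> * (y * Z l \<omega> * Y \<omega>) \<le> \<epsilon> * (b * (Z l \<omega> * Y \<omega>))" using e by (intro mult_left_mono) auto
  moreover have "U \<epsilon> - \<epsilon> * (y * Z l \<omega> * Y \<omega>) \<le> V (y * Z l \<omega> * Y \<omega>)"
    using le_V[OF w0 e] by (simp add: mult.commute)
  ultimately have lo: "- (\<bar>U \<epsilon>\<bar> + \<epsilon>*b*(Z l \<omega> * Y \<omega>)) \<le> V (y * Z l \<omega> * Y \<omega>)"
    by (simp add: mult.assoc)
  have "0 \<le> K1*\<bar>V (Z l \<omega>)\<bar>" using K by simp
  moreover have "0 \<le> \<epsilon>*b*(Z l \<omega> * Y \<omega>)" using e a z Y0 by simp
  ultimately show ?thesis using up lo K by linarith
qed

lemma X_bound_int: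
  assumes a: "a > 0" "a \<le> y" "y \<le> b" and e: "\<epsilon> > 0"
    and K: "\<And>z. z > 0 \<Longrightarrow> V (a*c*z) \<le> K1*\<bar>V z\<bar> + K2" "0 \<le> K1" "0 \<le> K2"
    and l: "l \<in> \<Lambda>'" and A[measurable]: "A \<in> sets M"
  shows "(\<integral>\<^sup>+\<omega>. ennreal (\<bar>V (y * Z l \<omega> * Y \<omega>)\<bar> * indicator A \<omega>) \<partial>M)
    \<le> ennreal K1 * (\<integral>\<^sup>+\<omega>. ennreal (\<bar>V (Z l \<omega>)\<bar> * indicator A \<omega>) \<partial>M)
       + ennreal (K2 + \<bar>U \<epsilon>\<bar>) * emeasure M A + ennreal (\<epsilon>*b*S)"
proof -
  have [measurable]: "Z l \<in> borel_measurable M" using l by simp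
  note [measurable] = Ym
  have b0: "b > 0" using a by simp
  have "(\<integral>\<^sup>+\<omega>. ennreal (\<bar>V (y * Z l \<omega> * Y \<omega>)\<bar> * indicator A \<omega>) \<partial>M)
    \<le> (\<integral>\<^sup>+\<omega>. ennreal K1 * ennreal (\<bar>V (Z l \<omega>)\<bar> * indicator A \<omega>)
          + ennreal (K2 + \<bar>U \<epsilon>\<bar>) * indicator A \<omega> + ennreal (\<epsilon>*b) * ennreal (Z l \<omega> * Y \<omega>) \<partial>M)"
  proof (rule nn_integral_mono_AE)
    show "AE \<omega> in M. ennreal (\<bar>V (y * Z l \<omega> * Y \<omega>)\<bar> * indicator A \<omega>)
       \<le> ennreal K1 * ennreal (\<bar>V (Z l \<omega>)\<bar> * indicator A \<omega>)
          + ennreal (K2 + \<bar>U \<epsilon>\<bar>) * indicator A \<omega> + ennreal (\<epsilon>*b) * ennreal (Z l \<omega> * Y \<omega>)"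
      using Yc
    proof (rule AE_mp, intro AE_I2 impI)
      fix \<omega> assume w: "\<omega> \<in> space M" "c \<le> Y \<omega>"
      have z: "Z l \<omega> > 0" using Zp sub l w by blast
      have Y0: "Y \<omega> > 0" using w cpos by linarith
      have zy: "0 \<le> Z l \<omega> * Y \<omega>" using z Y0 by simp
      have eb: "0 \<le> \<epsilon>*b" using e b0 by simp
      have K2': "0 \<le> K2 + \<bar>U \<epsilon>\<bar>" using K by simp
      show "ennreal (\<bar>V (y * Z l \<omega> * Y \<omega>)\<bar> * indicator A \<omega>)
       \<le> ennreal K1 * ennreal (\<bar>V (Z l \<omega>)\<bar> * indicator A \<omega>)
          + ennreal (K2 + \<bar>U \<epsilon>\<bar>) * indicator A \<omega> + ennreal (\<epsilon>*b) * ennreal (Z l \<omega> * Y \<omega>)"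
      proof (cases "\<omega> \<in> A")
        case True
        have "ennreal (\<bar>V (y * Z l \<omega> * Y \<omega>)\<bar>)
           \<le> ennreal (K1*\<bar>V (Z l \<omega>)\<bar> + (K2 + \<bar>U \<epsilon>\<bar>) + \<epsilon>*b*(Z l \<omega> * Y \<omega>))"
          by (rule ennreal_leI, rule X_bound_pt[OF a e K l w])
        also have "\<dots> = ennreal K1 * ennreal (\<bar>V (Z l \<omega>)\<bar>) + ennreal (K2 + \<bar>U \<epsilon>\<bar>)
             + ennreal (\<epsilon>*b) * ennreal (Z l \<omega> * Y \<omega>)"
        proof -
          have p: "0 \<le> K1*\<bar>V (Z l \<omega>)\<bar>" using K by simp
          have r: "0 \<le> \<epsilon>*b*(Z l \<omega> * Y \<omega>)" using eb zy by simp
          have e1: "ennreal (K1*\<bar>V (Z l \<omega>)\<bar> + (K2 + \<bar>U \<epsilon>\<bar>) + \<epsilon>*b*(Z l \<omega> * Y \<omega>))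
             = ennreal (K1*\<bar>V (Z l \<omega>)\<bar> + (K2 + \<bar>U \<epsilon>\<bar>)) + ennreal (\<epsilon>*b*(Z l \<omega> * Y \<omega>))"
            by (rule ennreal_plus) (use p r K2' in auto)
          have e2: "ennreal (K1*\<bar>V (Z l \<omega>)\<bar> + (K2 + \<bar>U \<epsilon>\<bar>))
             = ennreal (K1*\<bar>V (Z l \<omega>)\<bar>) + ennreal (K2 + \<bar>U \<epsilon>\<bar>)"
            by (rule ennreal_plus) (use p K2' in auto)
          have e3: "ennreal (K1*\<bar>V (Z l \<omega>)\<bar>) = ennreal K1 * ennreal (\<bar>V (Z l \<omega>)\<bar>)"
            by (rule ennreal_mult) (use K in auto)
          have e4: "ennreal (\<epsilon>*b*(Z l \<omega> * Y \<omega>)) = ennreal (\<epsilon>*b) * ennreal (Z l \<omega> * Y \<omega>)"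
            by (rule ennreal_mult) (use eb zy in auto)
          show ?thesis unfolding e1 e2 e3 e4 ..
        qed
        finally show ?thesis using True by simp
      qed simp
    qed
  qed
  also have "\<dots> = ennreal K1 * (\<integral>\<^sup>+\<omega>. ennreal (\<bar>V (Z l \<omega>)\<bar> * indicator A \<omega>) \<partial>M)
       + ennreal (K2 + \<bar>U \<epsilon>\<bar>) * emeasure M A
       + ennreal (\<epsilon>*b) * (\<integral>\<^sup>+\<omega>. ennreal (Z l \<omega> * Y \<omega>) \<partial>M)"
    by (simp add: nn_integral_add nn_integral_cmult nn_integral_cmult_indicator)
  also have "\<dots> \<le> ennreal K1 * (\<integral>\<^sup>+\<omega>. ennreal (\<bar>V (Z l \<omega>)\<bar> * indicator A \<omega>) \<partial>M)
       + ennreal (K2 + \<bar>U \<epsilon>\<bar>) * emeasure M A + ennreal (\<epsilon>*b) * ennreal S"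
    using SZ[OF l] by (intro add_left_mono mult_left_mono) auto
  also have "ennreal (\<epsilon>*b) * ennreal S = ennreal (\<epsilon>*b*S)"
    using e b0 S0 by (simp add: ennreal_mult)
  finally show ?thesis .
qed


lemma tail_small:
  fixes f :: "'a \<Rightarrow> real"
  assumes [measurable]: "f \<in> borel_measurable M" and d: "d > 0"
  shows "\<exists>R. \<forall>R'\<ge>R. measure M {\<omega>\<in>space M. f \<omega> > R'} < d"
proof -
  define A where "A n = {\<omega>\<in>space M. f \<omega> > real n}" for n :: nat
  have As: "range A \<subseteq> sets M" by (auto simp: A_def)
  have dec: "decseq A" unfolding decseq_def A_def by auto
  have "(\<Inter>i. A i) = {}"
  proof (safe)
    fix x assume "x \<in> (\<Inter>i. A i)"
    moreover obtain n :: nat where "f x < real n" using reals_Archimedean2 by blast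
    ultimately show "x \<in> {}" by (auto simp: A_def dest!: spec[of _ n])
  qed
  then have "(\<lambda>n. measure M (A n)) \<longlonglongrightarrow> 0"
    using finite_Lim_measure_decseq[OF As dec] by simp
  then have "eventually (\<lambda>n. measure M (A n) < d) sequentially"
    using d by (intro order_tendstoD(2)) auto
  then obtain N where N: "measure M (A N) < d" by (auto simp: eventually_sequentially)
  have "measure M {\<omega>\<in>space M. f \<omega> > R'} < d" if "R' \<ge> real N" for R'
  proof -
    have "measure M {\<omega>\<in>space M. f \<omega> > R'} \<le> measure M (A N)"
      using that by (intro finite_measure_mono) (auto simp: A_def)
    then show ?thesis using N by simp
  qed
  then show ?thesis by blast
qed

lemma UAC:
  assumes e: "e > 0" and a: "a > 0" "a \<le> b"
  shows "\<exists>\<delta>>0. \<forall>y l A. a \<le> y \<longrightarrow> y \<le> b \<longrightarrow> l \<in> \<Lambda>' \<longrightarrow> A \<in> sets M \<longrightarrow> measure M A < \<delta> \<longrightarrow>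
      (\<integral>\<^sup>+\<omega>. ennreal (\<bar>V (y * Z l \<omega> * Y \<omega>)\<bar> * indicator A \<omega>) \<partial>M) < ennreal e"
proof -
  have ac: "a*c > 0" using a cpos by simp
  obtain K1 K2 where K: "0 \<le> K1" "0 \<le> K2" "\<And>z. z > 0 \<Longrightarrow> V (a*c*z) \<le> K1*\<bar>V z\<bar> + K2"
    using V_elastic[OF ac] by blast
  have b0: "b > 0" using a by simp
  define \<epsilon> where "\<epsilon> = e / (4*(b*(S+1)))"
  have q: "b*(S+1) > 0" using b0 S0 by simp
  have \<epsilon>: "\<epsilon> > 0" using e q by (simp add: \<epsilon>_def)
  define K2' where "K2' = K2 + \<bar>U \<epsilon>\<bar>"
  have K2': "K2' \<ge> 0" using K by (simp add: K2'_def)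
  define t where "t = e / (4*(K1+1))"
  have t: "t > 0" using e K by (simp add: t_def)
  obtain K where K0: "K \<ge> 0" and KT: "\<And>l. l\<in>\<Lambda>' \<Longrightarrow>
     (\<integral>\<^sup>+\<omega>. ennreal (\<bar>V (Z l \<omega>)\<bar> * indicator {\<omega>. \<bar>V (Z l \<omega>)\<bar> > K} \<omega>) \<partial>M) \<le> ennreal t"
    using UI_tail[OF t] by blast
  define \<delta> where "\<delta> = e / (4*(K1*K + K2' + 1))"
  have KK: "K1*K + K2' \<ge> 0" using K K0 K2' by simp
  have \<delta>: "\<delta> > 0" using e KK by (simp add: \<delta>_def)
  have r1: "K1 * t \<le> e/4"
  proof -
    have "K1 * t = (e/4) * (K1 / (K1+1))" using K by (simp add: t_def field_simps)
    also have "\<dots> \<le> (e/4) * 1" using K e by (intro mult_left_mono) auto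
    finally show ?thesis by simp
  qed
  have r3: "\<epsilon>*b*S < e/4"
  proof -
    have qn: "b*(S+1) \<noteq> 0" using q by linarith
    have "\<epsilon>*b*S = \<epsilon>*(b*S)" by (simp add: mult.assoc)
    also have "\<dots> < \<epsilon>*(b*(S+1))" using \<epsilon> b0 by (intro mult_strict_left_mono) auto
    also have "\<dots> = e/4" unfolding \<epsilon>_def by (rule div_aux4'[OF qn])
    finally show ?thesis .
  qed
  have "(\<integral>\<^sup>+\<omega>. ennreal (\<bar>V (y * Z l \<omega> * Y \<omega>)\<bar> * indicator A \<omega>) \<partial>M) < ennreal e"
    if y: "a \<le> y" "y \<le> b" and l: "l \<in> \<Lambda>'" and A: "A \<in> sets M" and mA: "measure M A < \<delta>" for y l A
  proof -
    have [measurable]: "Z l \<in> borel_measurable M" using l by simp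
    define m where "m = measure M A"
    have m0: "m \<ge> 0" by (simp add: m_def)
    have em: "emeasure M A = ennreal m" using A by (simp add: m_def emeasure_eq_measure)
    have "(\<integral>\<^sup>+\<omega>. ennreal (\<bar>V (y * Z l \<omega> * Y \<omega>)\<bar> * indicator A \<omega>) \<partial>M)
      \<le> ennreal K1 * (\<integral>\<^sup>+\<omega>. ennreal (\<bar>V (Z l \<omega>)\<bar> * indicator A \<omega>) \<partial>M)
         + ennreal K2' * emeasure M A + ennreal (\<epsilon>*b*S)"
      unfolding K2'_def by (rule X_bound_int[OF a(1) y \<epsilon> K(3) K(1) K(2) l A])
    also have "\<dots> \<le> ennreal K1 * (ennreal t + ennreal K * ennreal m) + ennreal K2' * ennreal m + ennreal (\<epsilon>*b*S)"
    proof -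
      have "(\<integral>\<^sup>+\<omega>. ennreal (\<bar>V (Z l \<omega>)\<bar> * indicator A \<omega>) \<partial>M)
          \<le> (\<integral>\<^sup>+\<omega>. ennreal (\<bar>V (Z l \<omega>)\<bar> * indicator {\<omega>. \<bar>V (Z l \<omega>)\<bar> > K} \<omega>) \<partial>M) + ennreal K * emeasure M A"
        by (rule tail_bound) (use A K0 in auto)
      also have "\<dots> \<le> ennreal t + ennreal K * ennreal m"
        unfolding em using KT[OF l] by (rule add_right_mono)
      finally show ?thesis using em by (intro add_right_mono add_mono mult_left_mono) auto
    qed
    also have "\<dots> = ennreal (K1 * (t + K * m) + K2' * m + \<epsilon>*b*S)"
      using K K0 K2' m0 t \<epsilon> b0 S0
      by (simp add: ennreal_mult ennreal_plus add_nonneg_nonneg mult_nonneg_nonneg)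
    also have "\<dots> < ennreal e"
    proof (subst ennreal_less_iff)
      show "0 \<le> K1 * (t + K * m) + K2' * m + \<epsilon>*b*S"
        using K K0 K2' m0 t \<epsilon> b0 S0 by (simp add: add_nonneg_nonneg mult_nonneg_nonneg)
      have "(K1*K + K2') * m \<le> (K1*K + K2' + 1) * \<delta>"
        using KK m0 mA by (intro mult_mono) (auto simp: m_def)
      also have "\<dots> = e/4" using KK by (simp add: \<delta>_def field_simps)
      finally have r2: "(K1*K + K2') * m \<le> e/4" .
      show "K1 * (t + K * m) + K2' * m + \<epsilon>*b*S < e"
        using r1 r2 r3 e by (simp add: algebra_simps)
    qed
    finally show ?thesis .
  qed
  then show ?thesis using \<delta> by blast
qed


lemma integrable_X:
  assumes y: "y > 0" and l: "l \<in> \<Lambda>'"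
  shows "integrable M (\<lambda>\<omega>. V (y * Z l \<omega> * Y \<omega>))"
proof -
  have [measurable]: "Z l \<in> borel_measurable M" using l by simp
  note [measurable] = Ym
  have yc: "y*c > 0" using y cpos by simp
  obtain K1 K2 where K: "0 \<le> K1" "0 \<le> K2" "\<And>z. z > 0 \<Longrightarrow> V (y*c*z) \<le> K1*\<bar>V z\<bar> + K2"
    using V_elastic[OF yc] by blast
  obtain K where K0: "K \<ge> 0" and KT: "\<And>l. l\<in>\<Lambda>' \<Longrightarrow>
     (\<integral>\<^sup>+\<omega>. ennreal (\<bar>V (Z l \<omega>)\<bar> * indicator {\<omega>. \<bar>V (Z l \<omega>)\<bar> > K} \<omega>) \<partial>M) \<le> ennreal 1"
    using UI_tail[of 1] by auto
  have sp: "emeasure M (space M) = 1" by (simp add: emeasure_space_1)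
  have "(\<integral>\<^sup>+\<omega>. ennreal (\<bar>V (y * Z l \<omega> * Y \<omega>)\<bar> * indicator (space M) \<omega>) \<partial>M)
    \<le> ennreal K1 * (\<integral>\<^sup>+\<omega>. ennreal (\<bar>V (Z l \<omega>)\<bar> * indicator (space M) \<omega>) \<partial>M)
       + ennreal (K2 + \<bar>U 1\<bar>) * emeasure M (space M) + ennreal (1*y*S)"
    by (rule X_bound_int[OF y order_refl order_refl _ K(3) K(1) K(2) l]) auto
  also have "\<dots> \<le> ennreal K1 * (ennreal 1 + ennreal K * 1) + ennreal (K2 + \<bar>U 1\<bar>) * 1 + ennreal (1*y*S)"
  proof -
    have "(\<integral>\<^sup>+\<omega>. ennreal (\<bar>V (Z l \<omega>)\<bar> * indicator (space M) \<omega>) \<partial>M)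
        \<le> (\<integral>\<^sup>+\<omega>. ennreal (\<bar>V (Z l \<omega>)\<bar> * indicator {\<omega>. \<bar>V (Z l \<omega>)\<bar> > K} \<omega>) \<partial>M) + ennreal K * emeasure M (space M)"
      by (rule tail_bound) (use K0 in auto)
    also have "\<dots> \<le> ennreal 1 + ennreal K * 1"
      unfolding sp using KT[OF l] by (rule add_right_mono)
    finally show ?thesis using sp by (intro add_right_mono add_mono mult_left_mono) auto
  qed
  also have "\<dots> < \<infinity>" by (simp add: ennreal_mult_less_top)
  finally have fin: "(\<integral>\<^sup>+\<omega>. ennreal (\<bar>V (y * Z l \<omega> * Y \<omega>)\<bar> * indicator (space M) \<omega>) \<partial>M) < \<infinity>" .
  show ?thesis
  proof (rule integrableI_bounded)
    show "(\<lambda>\<omega>. V (y * Z l \<omega> * Y \<omega>)) \<in> borel_measurable M" by measurable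
    have "(\<integral>\<^sup>+\<omega>. ennreal (norm (V (y * Z l \<omega> * Y \<omega>))) \<partial>M)
        = (\<integral>\<^sup>+\<omega>. ennreal (\<bar>V (y * Z l \<omega> * Y \<omega>)\<bar> * indicator (space M) \<omega>) \<partial>M)"
      by (intro nn_integral_cong) simp
    then show "(\<integral>\<^sup>+\<omega>. ennreal (norm (V (y * Z l \<omega> * Y \<omega>))) \<partial>M) < \<infinity>" using fin by simp
  qed
qed

lemma cont_X:
  assumes y0: "y0 > 0" and l0: "l0 \<in> \<Lambda>'" and e: "e > 0"
  shows "\<exists>W. openin (prod_topology euclideanreal \<tau>) W \<and> (y0, l0) \<in> W \<and>
          (\<forall>y l. (y, l) \<in> W \<longrightarrow> y > 0 \<longrightarrow> l \<in> \<Lambda>' \<longrightarrow>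
             (\<integral>\<omega>. \<bar>V (y * Z l \<omega> * Y \<omega>) - V (y0 * Z l0 \<omega> * Y \<omega>)\<bar> \<partial>M) < e)"
proof -
  have [measurable]: "Z l0 \<in> borel_measurable M" using l0 by simp
  note [measurable] = Ym
  define a where "a = y0/2"
  define b where "b = 2*y0"
  have a0: "a > 0" "a \<le> b" using y0 by (auto simp: a_def b_def)
  have e4: "e/4 > 0" using e by simp
  obtain \<delta> where \<delta>: "\<delta> > 0" and uac: "\<And>y l A. a \<le> y \<Longrightarrow> y \<le> b \<Longrightarrow> l \<in> \<Lambda>' \<Longrightarrow> A \<in> sets M \<Longrightarrow> measure M A < \<delta> \<Longrightarrow>
      (\<integral>\<^sup>+\<omega>. ennreal (\<bar>V (y * Z l \<omega> * Y \<omega>)\<bar> * indicator A \<omega>) \<partial>M) < ennreal (e/4)"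
    using UAC[OF e4 a0] by blast
  have d4: "\<delta>/4 > 0" using \<delta> by simp
  obtain R1 where R1: "\<And>R'. R' \<ge> R1 \<Longrightarrow> measure M {\<omega>\<in>space M. Y \<omega> > R'} < \<delta>/4"
    using tail_small[OF Ym d4] by blast
  obtain R2 where R2: "\<And>R'. R' \<ge> R2 \<Longrightarrow> measure M {\<omega>\<in>space M. Z l0 \<omega> > R'} < \<delta>/4"
    using tail_small[OF _ d4, of "Z l0"] by auto
  obtain R3 where R3: "\<And>R'. R' \<ge> R3 \<Longrightarrow> measure M {\<omega>\<in>space M. 1 / Z l0 \<omega> > R'} < \<delta>/4"
    using tail_small[OF _ d4, of "\<lambda>\<omega>. 1 / Z l0 \<omega>"] by auto
  define R where "R = max 1 (max R1 (max R2 R3))"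
  have R: "R \<ge> 1" "R \<ge> R1" "R \<ge> R2" "R \<ge> R3" by (auto simp: R_def)
  have R0: "R > 0" using R by simp
  define \<alpha> where "\<alpha> = a*c/(2*R)"
  define \<beta> where "\<beta> = b*(R+1)*R"
  have \<alpha>0: "\<alpha> > 0" using a0 cpos R0 by (simp add: \<alpha>_def)
  have "continuous_on {\<alpha>..\<beta>} V"
    by (rule continuous_on_subset[OF V_cont]) (use \<alpha>0 in auto)
  then have "uniformly_continuous_on {\<alpha>..\<beta>} V"
    by (rule compact_uniformly_continuous) simp
  then obtain \<rho> where \<rho>: "\<rho> > 0" and uc: "\<And>w w'. w \<in> {\<alpha>..\<beta>} \<Longrightarrow> w' \<in> {\<alpha>..\<beta>} \<Longrightarrow>
      dist w' w < \<rho> \<Longrightarrow> dist (V w') (V w) < e/4"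
    unfolding uniformly_continuous_on_def using e4 by metis
  define r where "r = min a (\<rho>/(2*((R+1)*R)))"
  define d where "d = min (1/(2*R)) (min (\<rho>/(4*(y0*R))) (\<delta>/4))"
  have r0: "r > 0" using a0 \<rho> R0 by (simp add: r_def)
  have d0: "d > 0" using y0 \<rho> R0 \<delta> by (simp add: d_def)
  have l0t: "l0 \<in> topspace \<tau>" using l0 sub by auto
  obtain N where N: "openin \<tau> N" "l0 \<in> N"
    and Nm: "\<And>l. l \<in> N \<Longrightarrow> measure M {\<omega>\<in>space M. \<bar>Z l \<omega> - Z l0 \<omega>\<bar> > d} < d"
    using tau d0 l0t unfolding appropriate_topology_def by metis
  define W where "W = {y0 - r <..< y0 + r} \<times> N"
  have Wo: "openin (prod_topology euclideanreal \<tau>) W"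
    unfolding W_def openin_prod_Times_iff using N by (auto simp: open_openin[symmetric])
  have Win: "(y0, l0) \<in> W" using r0 N by (simp add: W_def)
  have main: "(\<integral>\<omega>. \<bar>V (y * Z l \<omega> * Y \<omega>) - V (y0 * Z l0 \<omega> * Y \<omega>)\<bar> \<partial>M) < e"
    if yl: "(y, l) \<in> W" "y > 0" "l \<in> \<Lambda>'" for y l
  proof -
    have [measurable]: "Z l \<in> borel_measurable M" using yl by simp
    have yr: "\<bar>y - y0\<bar> < r" "l \<in> N" using yl by (auto simp: W_def abs_less_iff)
    have yab: "a \<le> y" "y \<le> b" using yr r0 y0 unfolding r_def a_def b_def abs_less_iff by linarith+
    have y0ab: "a \<le> y0" "y0 \<le> b" using y0 by (auto simp: a_def b_def)
    define G where "G = {\<omega>\<in>space M. c \<le> Y \<omega> \<and> Y \<omega> \<le> R \<and> Z l0 \<omega> \<le> R \<and> 1 / Z l0 \<omega> \<le> R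
       \<and> \<bar>Z l \<omega> - Z l0 \<omega>\<bar> \<le> d}"
    define Gc where "Gc = space M - G"
    have G[measurable]: "G \<in> sets M" unfolding G_def by measurable
    have Gc[measurable]: "Gc \<in> sets M" unfolding Gc_def by measurable
    define B0 where "B0 = {\<omega>\<in>space M. Y \<omega> < c}"
    define B1 where "B1 = {\<omega>\<in>space M. Y \<omega> > R}"
    define B2 where "B2 = {\<omega>\<in>space M. Z l0 \<omega> > R}"
    define B3 where "B3 = {\<omega>\<in>space M. 1 / Z l0 \<omega> > R}"
    define B4 where "B4 = {\<omega>\<in>space M. \<bar>Z l \<omega> - Z l0 \<omega>\<bar> > d}"
    have Bs[measurable]: "B0 \<in> sets M" "B1 \<in> sets M" "B2 \<in> sets M" "B3 \<in> sets M" "B4 \<in> sets M"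
      unfolding B0_def B1_def B2_def B3_def B4_def by measurable
    have "Gc \<subseteq> B0 \<union> B1 \<union> B2 \<union> B3 \<union> B4"
      unfolding Gc_def G_def B0_def B1_def B2_def B3_def B4_def by auto
    then have "measure M Gc \<le> measure M (B0 \<union> B1 \<union> B2 \<union> B3 \<union> B4)"
      by (intro finite_measure_mono) auto
    also have "\<dots> \<le> measure M B0 + measure M B1 + measure M B2 + measure M B3 + measure M B4"
    proof -
      have "measure M (B0 \<union> B1) \<le> measure M B0 + measure M B1" by (rule measure_Un_le) auto
      moreover have "measure M (B0 \<union> B1 \<union> B2) \<le> measure M (B0 \<union> B1) + measure M B2"
        by (rule measure_Un_le) auto
      moreover have "measure M (B0 \<union> B1 \<union> B2 \<union> B3) \<le> measure M (B0 \<union> B1 \<union> B2) + measure M B3"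
        by (rule measure_Un_le) auto
      moreover have "measure M (B0 \<union> B1 \<union> B2 \<union> B3 \<union> B4) \<le> measure M (B0 \<union> B1 \<union> B2 \<union> B3) + measure M B4"
        by (rule measure_Un_le) auto
      ultimately show ?thesis by linarith
    qed
    also have "\<dots> < \<delta>"
    proof -
      have "emeasure M B0 = 0"
        using Yc AE_iff_measurable[of B0 M "\<lambda>\<omega>. c \<le> Y \<omega>"] by (auto simp: B0_def not_le)
      then have m0: "measure M B0 = 0" by (simp add: measure_def)
      have m1: "measure M B1 < \<delta>/4" using R1[OF R(2)] by (simp add: B1_def)
      have m2: "measure M B2 < \<delta>/4" using R2[OF R(3)] by (simp add: B2_def)
      have m3: "measure M B3 < \<delta>/4" using R3[OF R(4)] by (simp add: B3_def)
      have m4: "measure M B4 < \<delta>/4" using Nm[OF yr(2)] by (simp add: B4_def d_def)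
      show ?thesis using m0 m1 m2 m3 m4 by linarith
    qed
    finally have mGc: "measure M Gc < \<delta>" .
    let ?XA = "\<lambda>\<omega>. V (y * Z l \<omega> * Y \<omega>)"
    let ?XB = "\<lambda>\<omega>. V (y0 * Z l0 \<omega> * Y \<omega>)"
    have pt: "ennreal \<bar>?XA \<omega> - ?XB \<omega>\<bar> \<le> ennreal (e/4) * indicator G \<omega>
        + ennreal (\<bar>?XA \<omega>\<bar> * indicator Gc \<omega>) + ennreal (\<bar>?XB \<omega>\<bar> * indicator Gc \<omega>)"
      if w: "\<omega> \<in> space M" for \<omega>
    proof (cases "\<omega> \<in> G")
      case True
      have g: "c \<le> Y \<omega>" "Y \<omega> \<le> R" "Z l0 \<omega> \<le> R" "1 / Z l0 \<omega> \<le> R" "\<bar>Z l \<omega> - Z l0 \<omega>\<bar> \<le> d"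
        using True by (auto simp: G_def)
      have z0: "Z l0 \<omega> > 0" using Zp l0t w by blast
      have ca: "a*c/(2*R) \<le> y*Z l \<omega>*Y \<omega> \<and> y*Z l \<omega>*Y \<omega> \<le> b*(R+1)*R \<and> a*c/(2*R) \<le> y0*Z l0 \<omega>*Y \<omega>
          \<and> y0*Z l0 \<omega>*Y \<omega> \<le> b*(R+1)*R \<and> \<bar>y*Z l \<omega>*Y \<omega> - y0*Z l0 \<omega>*Y \<omega>\<bar> < \<rho>"
        by (rule close_args[OF R(1) cpos g(1,2,3,4) z0 g(5) _ _ y0 a_def b_def yr(1)])
          (auto simp: d_def r_def \<rho>)
      then have "dist (V (y*Z l \<omega>*Y \<omega>)) (V (y0*Z l0 \<omega>*Y \<omega>)) < e/4"
        by (intro uc) (auto simp: \<alpha>_def \<beta>_def dist_real_def)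
      then have "\<bar>?XA \<omega> - ?XB \<omega>\<bar> < e/4" by (simp only: dist_real_def)
      then have "\<bar>?XA \<omega> - ?XB \<omega>\<bar> \<le> e/4" by (rule less_imp_le)
      then have "ennreal \<bar>?XA \<omega> - ?XB \<omega>\<bar> \<le> ennreal (e/4)" by (rule ennreal_leI)
      moreover have "\<omega> \<notin> Gc" using True by (simp add: Gc_def)
      ultimately show ?thesis using True by simp
    next
      case False
      then have "\<omega> \<in> Gc" using w by (simp add: Gc_def)
      have "ennreal \<bar>?XA \<omega> - ?XB \<omega>\<bar> \<le> ennreal (\<bar>?XA \<omega>\<bar> + \<bar>?XB \<omega>\<bar>)"
        by (rule ennreal_leI) (rule abs_triangle_ineq4)
      then show ?thesis using \<open>\<omega> \<in> Gc\<close> False by simp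
    qed
    have "(\<integral>\<^sup>+\<omega>. ennreal \<bar>?XA \<omega> - ?XB \<omega>\<bar> \<partial>M) \<le>
        (\<integral>\<^sup>+\<omega>. ennreal (e/4) * indicator G \<omega>
          + ennreal (\<bar>?XA \<omega>\<bar> * indicator Gc \<omega>) + ennreal (\<bar>?XB \<omega>\<bar> * indicator Gc \<omega>) \<partial>M)"
      using pt by (intro nn_integral_mono) auto
    also have "\<dots> = ennreal (e/4) * emeasure M G + (\<integral>\<^sup>+\<omega>. ennreal (\<bar>?XA \<omega>\<bar> * indicator Gc \<omega>) \<partial>M)
        + (\<integral>\<^sup>+\<omega>. ennreal (\<bar>?XB \<omega>\<bar> * indicator Gc \<omega>) \<partial>M)"
      by (simp add: nn_integral_add nn_integral_cmult_indicator)
    also have "\<dots> \<le> ennreal (e/4) * 1 + ennreal (e/4) + ennreal (e/4)"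
    proof -
      have h1: "ennreal (e/4) * emeasure M G \<le> ennreal (e/4) * 1"
        by (rule mult_left_mono[OF emeasure_le_1]) simp
      have h2: "(\<integral>\<^sup>+\<omega>. ennreal (\<bar>?XA \<omega>\<bar> * indicator Gc \<omega>) \<partial>M) \<le> ennreal (e/4)"
        by (rule less_imp_le[OF uac[OF yab yl(3) Gc mGc]])
      have h3: "(\<integral>\<^sup>+\<omega>. ennreal (\<bar>?XB \<omega>\<bar> * indicator Gc \<omega>) \<partial>M) \<le> ennreal (e/4)"
        using uac[of y0 l0 Gc] y0ab l0 Gc mGc by (meson less_imp_le)
      show ?thesis by (rule add_mono[OF add_mono[OF h1 h2] h3])
    qed
    also have "\<dots> = ennreal (3*e/4)" using e by (simp add: ennreal_plus[symmetric] del: ennreal_plus)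
    finally have le: "(\<integral>\<^sup>+\<omega>. ennreal \<bar>?XA \<omega> - ?XB \<omega>\<bar> \<partial>M) \<le> ennreal (3*e/4)" .
    have int: "integrable M (\<lambda>\<omega>. \<bar>?XA \<omega> - ?XB \<omega>\<bar>)"
      using integrable_X[OF yl(2,3)] integrable_X[OF y0 l0] by auto
    have "(\<integral>\<^sup>+\<omega>. ennreal \<bar>?XA \<omega> - ?XB \<omega>\<bar> \<partial>M) = ennreal (\<integral>\<omega>. \<bar>?XA \<omega> - ?XB \<omega>\<bar> \<partial>M)"
      by (rule nn_integral_eq_integral[OF int]) simp
    with le have "ennreal (\<integral>\<omega>. \<bar>?XA \<omega> - ?XB \<omega>\<bar> \<partial>M) \<le> ennreal (3*e/4)" by simp
    then have "(\<integral>\<omega>. \<bar>?XA \<omega> - ?XB \<omega>\<bar> \<partial>M) \<le> 3*e/4"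
      using e by (subst (asm) ennreal_le_iff) auto
    then show ?thesis using e by linarith
  qed
  show ?thesis using Wo Win main by blast
qed

end



theorem lemma3p5:
  fixes M :: "'a measure" and \<tau> :: "'l topology"
    and Z :: "'l \<Rightarrow> 'a \<Rightarrow> real" and \<Lambda>' :: "'l set"
    and U :: "real \<Rightarrow> real" and Y :: "'a \<Rightarrow> real"
  assumes "prob_space M"
    and Z_meas: "\<And>l. l \<in> topspace \<tau> \<Longrightarrow> Z l \<in> borel_measurable M"
    and Z_pos: "\<And>l \<omega>. l \<in> topspace \<tau> \<Longrightarrow> \<omega> \<in> space M \<Longrightarrow> Z l \<omega> > 0"
    and Z_exp: "\<And>l. l \<in> topspace \<tau> \<Longrightarrow> (\<integral>\<^sup>+ \<omega>. ennreal (Z l \<omega>) \<partial>M) \<le> 1"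
    and U: "reasonably_elastic U"
    and sub: "\<Lambda>' \<subseteq> topspace \<tau>"
    and Vrc: "unif_integrable M ((\<lambda>l \<omega>. conjugate U (Z l \<omega>)) ` \<Lambda>')"
    and tau: "appropriate_topology M \<tau> Z"
    and Y_meas: "Y \<in> borel_measurable M"
    and Y_low: "\<exists>c>0. AE \<omega> in M. Y \<omega> \<ge> c"
    and sup_fin: "(SUP l\<in>\<Lambda>'. \<integral>\<^sup>+ \<omega>. ennreal (Z l \<omega> * Y \<omega>) \<partial>M) < \<infinity>"
  shows "(\<forall>y>0. \<forall>l\<in>\<Lambda>'. integrable M (\<lambda>\<omega>. conjugate U (y * Z l \<omega> * Y \<omega>)))
     \<and> (\<forall>y0>0. \<forall>l0\<in>\<Lambda>'. \<forall>e>0. \<exists>W. openin (prod_topology euclideanreal \<tau>) W \<and> (y0, l0) \<in> W \<and>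
          (\<forall>(y, l)\<in>W. y > 0 \<and> l \<in> \<Lambda>' \<longrightarrow>
             (\<integral>\<omega>. \<bar>conjugate U (y * Z l \<omega> * Y \<omega>) - conjugate U (y0 * Z l0 \<omega> * Y \<omega>)\<bar> \<partial>M) < e))
     \<and> (\<forall>y0>0. \<forall>l0\<in>\<Lambda>'. \<forall>e>0. \<exists>W. openin (prod_topology euclideanreal \<tau>) W \<and> (y0, l0) \<in> W \<and>
          (\<forall>(y, l)\<in>W. y > 0 \<and> l \<in> \<Lambda>' \<longrightarrow>
             \<bar>(\<integral>\<omega>. conjugate U (y * Z l \<omega> * Y \<omega>) \<partial>M) - (\<integral>\<omega>. conjugate U (y0 * Z l0 \<omega> * Y \<omega>) \<partial>M)\<bar> < e))"
proof -
  interpret P: prob_space M by fact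
  obtain c where c: "c > 0" "AE \<omega> in M. Y \<omega> \<ge> c" using Y_low by blast
  define S where "S = enn2real (SUP l\<in>\<Lambda>'. \<integral>\<^sup>+ \<omega>. ennreal (Z l \<omega> * Y \<omega>) \<partial>M)"
  have S0: "S \<ge> 0" by (simp add: S_def)
  have SZ: "(\<integral>\<^sup>+\<omega>. ennreal (Z l \<omega> * Y \<omega>) \<partial>M) \<le> ennreal S" if "l \<in> \<Lambda>'" for l
  proof -
    have "(\<integral>\<^sup>+\<omega>. ennreal (Z l \<omega> * Y \<omega>) \<partial>M) \<le> (SUP l\<in>\<Lambda>'. \<integral>\<^sup>+ \<omega>. ennreal (Z l \<omega> * Y \<omega>) \<partial>M)"
      using that by (rule SUP_upper)
    also have "\<dots> = ennreal S" unfolding S_def using sup_fin by simp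
    finally show ?thesis .
  qed
  have "setting U M \<tau> Z \<Lambda>' Y c S"
    unfolding setting_def setting_axioms_def util_def
    using assms(1,2,3) U sub Vrc tau Y_meas c S0 SZ by blast
  then interpret setting U M \<tau> Z \<Lambda>' Y c S .
  have p1: "\<forall>y>0. \<forall>l\<in>\<Lambda>'. integrable M (\<lambda>\<omega>. conjugate U (y * Z l \<omega> * Y \<omega>))"
    using integrable_X by blast
  have p2: "\<forall>y0>0. \<forall>l0\<in>\<Lambda>'. \<forall>e>0. \<exists>W. openin (prod_topology euclideanreal \<tau>) W \<and> (y0, l0) \<in> W \<and>
          (\<forall>(y, l)\<in>W. y > 0 \<and> l \<in> \<Lambda>' \<longrightarrow>
             (\<integral>\<omega>. \<bar>conjugate U (y * Z l \<omega> * Y \<omega>) - conjugate U (y0 * Z l0 \<omega> * Y \<omega>)\<bar> \<partial>M) < e)"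
  proof (intro allI impI ballI)
    fix y0 e :: real and l0 assume h: "y0 > 0" "l0 \<in> \<Lambda>'" "e > 0"
    obtain W where W: "openin (prod_topology euclideanreal \<tau>) W" "(y0, l0) \<in> W"
      "\<And>y l. (y, l) \<in> W \<Longrightarrow> y > 0 \<Longrightarrow> l \<in> \<Lambda>' \<Longrightarrow>
             (\<integral>\<omega>. \<bar>conjugate U (y * Z l \<omega> * Y \<omega>) - conjugate U (y0 * Z l0 \<omega> * Y \<omega>)\<bar> \<partial>M) < e"
      using cont_X[OF h] by blast
    show "\<exists>W. openin (prod_topology euclideanreal \<tau>) W \<and> (y0, l0) \<in> W \<and>
          (\<forall>(y, l)\<in>W. y > 0 \<and> l \<in> \<Lambda>' \<longrightarrow>
             (\<integral>\<omega>. \<bar>conjugate U (y * Z l \<omega> * Y \<omega>) - conjugate U (y0 * Z l0 \<omega> * Y \<omega>)\<bar> \<partial>M) < e)"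
      using W by blast
  qed
  have p3: "\<forall>y0>0. \<forall>l0\<in>\<Lambda>'. \<forall>e>0. \<exists>W. openin (prod_topology euclideanreal \<tau>) W \<and> (y0, l0) \<in> W \<and>
          (\<forall>(y, l)\<in>W. y > 0 \<and> l \<in> \<Lambda>' \<longrightarrow>
             \<bar>(\<integral>\<omega>. conjugate U (y * Z l \<omega> * Y \<omega>) \<partial>M) - (\<integral>\<omega>. conjugate U (y0 * Z l0 \<omega> * Y \<omega>) \<partial>M)\<bar> < e)"
  proof (intro allI impI ballI)
    fix y0 e :: real and l0 assume h: "y0 > 0" "l0 \<in> \<Lambda>'" "e > 0"
    obtain W where W: "openin (prod_topology euclideanreal \<tau>) W" "(y0, l0) \<in> W"
      "\<And>y l. (y, l) \<in> W \<Longrightarrow> y > 0 \<Longrightarrow> l \<in> \<Lambda>' \<Longrightarrow>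
             (\<integral>\<omega>. \<bar>conjugate U (y * Z l \<omega> * Y \<omega>) - conjugate U (y0 * Z l0 \<omega> * Y \<omega>)\<bar> \<partial>M) < e"
      using cont_X[OF h] by blast
    have "\<bar>(\<integral>\<omega>. conjugate U (y * Z l \<omega> * Y \<omega>) \<partial>M) - (\<integral>\<omega>. conjugate U (y0 * Z l0 \<omega> * Y \<omega>) \<partial>M)\<bar> < e"
      if yl: "(y, l) \<in> W" "y > 0" "l \<in> \<Lambda>'" for y l
    proof -
      have i1: "integrable M (\<lambda>\<omega>. conjugate U (y * Z l \<omega> * Y \<omega>))" using integrable_X yl by blast
      have i2: "integrable M (\<lambda>\<omega>. conjugate U (y0 * Z l0 \<omega> * Y \<omega>))" using integrable_X h by blast
      have "(\<integral>\<omega>. conjugate U (y * Z l \<omega> * Y \<omega>) \<partial>M) - (\<integral>\<omega>. conjugate U (y0 * Z l0 \<omega> * Y \<omega>) \<partial>M)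
          = (\<integral>\<omega>. conjugate U (y * Z l \<omega> * Y \<omega>) - conjugate U (y0 * Z l0 \<omega> * Y \<omega>) \<partial>M)"
        using Bochner_Integration.integral_diff[OF i1 i2] by simp
      then have "\<bar>(\<integral>\<omega>. conjugate U (y * Z l \<omega> * Y \<omega>) \<partial>M) - (\<integral>\<omega>. conjugate U (y0 * Z l0 \<omega> * Y \<omega>) \<partial>M)\<bar>
          \<le> (\<integral>\<omega>. \<bar>conjugate U (y * Z l \<omega> * Y \<omega>) - conjugate U (y0 * Z l0 \<omega> * Y \<omega>)\<bar> \<partial>M)"
        using integral_norm_bound[of M "\<lambda>\<omega>. conjugate U (y * Z l \<omega> * Y \<omega>) - conjugate U (y0 * Z l0 \<omega> * Y \<omega>)"]
        by simp
      then show ?thesis using W(3)[OF yl] by linarith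
    qed
    then show "\<exists>W. openin (prod_topology euclideanreal \<tau>) W \<and> (y0, l0) \<in> W \<and>
          (\<forall>(y, l)\<in>W. y > 0 \<and> l \<in> \<Lambda>' \<longrightarrow>
             \<bar>(\<integral>\<omega>. conjugate U (y * Z l \<omega> * Y \<omega>) \<partial>M) - (\<integral>\<omega>. conjugate U (y0 * Z l0 \<omega> * Y \<omega>) \<partial>M)\<bar> < e)"
      using W(1,2) by blast
  qed
  show ?thesis using p1 p2 p3 by blast
qed


end
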